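(* There is an absolute constant $c$ such that for every graph $G$ with $|V(G)|=2^k$ ($|V(G)|\ge2$) and bijective encoding $\mathrm{enc}:V(G)\to\{0,1\}^k$, $\mathrm{opt}(R[G])\le c\,|V(G)|^2\log|V(G)|$.
   Context: $R[G]=(P,N)$ with $P=\{\mathrm{enc}(u)1\mathrm{enc}(u)^R:u\in V(G)\}$, $N=\{\mathrm{enc}(u)1\mathrm{enc}(v)^R:uv\in E(G)\}$ ($x^R$ = reversal). $\mathrm{opt}(\cdot)$ is the minimum number of states of a canonical DFA consistent with the samples: a DFA over $\{0,1\}$ with possibly partial transition function (undefined runs reject) whose states are partitioned into layers $L_0=\{q_0\},\dots,L_\ell$ with every transition going from some $L_t$ to $L_{t+1}$ and all accepting states in $L_\ell$. *)

theory Defs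
  imports Complex_Main
begin

text \<open>Finite simple graphs on vertex set V (vertices are naturals, which is no loss of
generality): E is a symmetric irreflexive relation on V, given as a set of ordered pairs;
an undirected edge uv is represented by both (u,v) and (v,u).\<close>

definition simple_graph :: "nat set \<Rightarrow> (nat \<times> nat) set \<Rightarrow> bool" where
  "simple_graph V E \<longleftrightarrow> finite V \<and> E \<subseteq> V \<times> V \<and> sym E \<and> irrefl E"

text \<open>Words over {0,1} are bool lists (True = 1). The sample R[G] = (P, N).\<close>

definition R_samples :: "nat set \<Rightarrow> (nat \<times> nat) set \<Rightarrow> (nat \<Rightarrow> bool list)
    \<Rightarrow> bool list set \<times> bool list set" where
  "R_samples V E enc =
     ({enc u @ [True] @ rev (enc u) | u. u \<in> V},
      {enc u @ [True] @ rev (enc v) | u v. (u, v) \<in> E})"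

fun run :: "(nat \<Rightarrow> bool \<Rightarrow> nat option) \<Rightarrow> nat \<Rightarrow> bool list \<Rightarrow> nat option" where
  "run \<delta> q [] = Some q"
| "run \<delta> q (a # w) = (case \<delta> q a of None \<Rightarrow> None | Some q' \<Rightarrow> run \<delta> q' w)"

definition accepts :: "(nat \<Rightarrow> bool \<Rightarrow> nat option) \<Rightarrow> nat \<Rightarrow> nat set \<Rightarrow> bool list \<Rightarrow> bool" where
  "accepts \<delta> q0 F w \<longleftrightarrow> (\<exists>q. run \<delta> q0 w = Some q \<and> q \<in> F)"

definition canonical_dfa :: "nat set \<Rightarrow> nat \<Rightarrow> (nat \<Rightarrow> bool \<Rightarrow> nat option) \<Rightarrow> nat set
    \<Rightarrow> (nat \<Rightarrow> nat) \<Rightarrow> nat \<Rightarrow> bool" where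
  "canonical_dfa Q q0 \<delta> F lay l \<longleftrightarrow>
     finite Q \<and> q0 \<in> Q \<and> F \<subseteq> Q \<and>
     (\<forall>q\<in>Q. lay q \<le> l) \<and>
     {q \<in> Q. lay q = 0} = {q0} \<and>
     (\<forall>q a q'. \<delta> q a = Some q' \<longrightarrow> q \<in> Q \<and> q' \<in> Q \<and> lay q' = Suc (lay q)) \<and>
     (\<forall>q\<in>F. lay q = l)"

definition consistent :: "(nat \<Rightarrow> bool \<Rightarrow> nat option) \<Rightarrow> nat \<Rightarrow> nat set
    \<Rightarrow> bool list set \<times> bool list set \<Rightarrow> bool" where
  "consistent \<delta> q0 F S \<longleftrightarrow>
     (\<forall>w\<in>fst S. accepts \<delta> q0 F w) \<and> (\<forall>w\<in>snd S. \<not> accepts \<delta> q0 F w)"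

definition opt :: "bool list set \<times> bool list set \<Rightarrow> nat" where
  "opt S = (LEAST n. \<exists>Q q0 \<delta> F lay l.
              canonical_dfa Q q0 \<delta> F lay l \<and> consistent \<delta> q0 F S \<and> card Q = n)"

end

theory Submission
  imports Defs
begin

fun code :: "bool list \<Rightarrow> nat" where
  "code [] = 1"
| "code (b # w) = 2 * code w + (if b then 1 else 0)"

lemma code_pos: "code w \<ge> 1"
  by (induction w) auto

lemma inj_code: "inj code"
proof (rule injI)
  fix x y show "code x = code y \<Longrightarrow> x = y"
  proof (induction x arbitrary: y)
    case Nil then show ?case using code_pos[of "tl y"] by (cases y) auto
  next
    case (Cons a x)
    show ?case
    proof (cases y)
      case Nil then show ?thesis using Cons.prems code_pos[of x] by auto
    next
      case (Cons b z)
      have e: "2 * code x + (if a then 1 else 0) = 2 * code z + (if b then 1 else 0)"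
        using Cons.prems \<open>y = b # z\<close> by simp
      have "code x = code z \<and> a = b" using e by (cases a; cases b) presburger+
      then show ?thesis using Cons.IH \<open>y = b # z\<close> by auto
    qed
  qed
qed

lemma inv_code[simp]: "inv code (code w) = w"
  by (simp add: inj_code)

lemma code_one: "code x = Suc 0 \<Longrightarrow> x = []"
  using code_pos[of "tl x"] by (cases x) (auto split: if_splits)

definition pre :: "bool list set \<Rightarrow> bool list set" where
  "pre P = {w. \<exists>v. w @ v \<in> P}"

definition dl :: "bool list set \<Rightarrow> nat \<Rightarrow> bool \<Rightarrow> nat option" where
  "dl P q a = (if q \<in> range code \<and> inv code q @ [a] \<in> pre P
      then Some (code (inv code q @ [a])) else None)"

lemma run1: "v @ u \<in> pre P \<Longrightarrow> run (dl P) (code v) u = Some (code (v @ u))"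
proof (induction u arbitrary: v)
  case Nil then show ?case by simp
next
  case (Cons a u)
  from Cons.prems obtain x where "v @ a # u @ x \<in> P" by (auto simp: pre_def)
  then have "v @ [a] \<in> pre P" by (auto simp: pre_def intro!: exI[of _ "u @ x"])
  then have "dl P (code v) a = Some (code (v @ [a]))" by (simp add: dl_def)
  moreover have "run (dl P) (code (v @ [a])) u = Some (code (v @ a # u))"
    using Cons.IH[of "v @ [a]"] Cons.prems by simp
  ultimately show ?case by simp
qed

lemma run2: "run (dl P) (code v) u = Some q \<Longrightarrow> q = code (v @ u) \<and> (u \<noteq> [] \<longrightarrow> v @ u \<in> pre P)"
proof (induction u arbitrary: v)
  case Nil then show ?case by simp
next
  case (Cons a u)
  from Cons.prems obtain q' where d: "dl P (code v) a = Some q'" and r: "run (dl P) q' u = Some q"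
    by (auto split: option.splits)
  from d have h: "v @ [a] \<in> pre P" "q' = code (v @ [a])" by (auto simp: dl_def split: if_splits)
  from Cons.IH[of "v @ [a]"] r h show ?case by (cases u) auto
qed

lemma pre_eq: "pre P = (\<Union>p\<in>P. (\<lambda>i. take i p) ` {0..length p})"
  unfolding pre_def
  by (auto, metis append_eq_conv_conj atLeastAtMost_iff le0 length_append le_add1 image_eqI,
      metis append_take_drop_id)

lemma card_pre: assumes "finite P" shows "card (pre P) \<le> (\<Sum>p\<in>P. Suc (length p))"
proof -
  have "card (pre P) \<le> (\<Sum>p\<in>P. card ((\<lambda>i. take i p) ` {0..length p}))"
    unfolding pre_eq using assms by (rule card_UN_le)
  also have "\<dots> \<le> (\<Sum>p\<in>P. Suc (length p))"
    by (rule sum_mono) (metis card_atLeastAtMost card_image_le finite_atLeastAtMost minus_nat.diff_0)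
  finally show ?thesis .
qed

theorem mainTheorem8:
  shows "\<exists>c::real. \<forall>(V::nat set) E (k::nat) (enc::nat \<Rightarrow> bool list).
     simple_graph V E \<and> card V = 2 ^ k \<and> card V \<ge> 2 \<and>
     bij_betw enc V {w. length w = k} \<longrightarrow>
     real (opt (R_samples V E enc)) \<le> c * real (card V) ^ 2 * log 2 (real (card V))"
proof (intro exI[of _ 4] allI impI)
  fix V E k and enc :: "nat \<Rightarrow> bool list"
  assume A: "simple_graph V E \<and> card V = 2 ^ k \<and> card V \<ge> 2 \<and> bij_betw enc V {w. length w = k}"
  define P where "P = fst (R_samples V E enc)"
  define N where "N = snd (R_samples V E enc)"
  have fV: "finite V" and irr: "irrefl E" using A unfolding simple_graph_def by auto
  have injE: "inj_on enc V" using A bij_betw_def by blast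
  have lenE: "u \<in> V \<Longrightarrow> length (enc u) = k" for u using A bij_betwE by blast
  have PV: "P = (\<lambda>u. enc u @ [True] @ rev (enc u)) ` V"
    unfolding P_def R_samples_def by auto
  have fP: "finite P" using PV fV by simp
  have cP: "card P \<le> card V" using PV card_image_le fV by simp
  have lenP: "p \<in> P \<Longrightarrow> length p = 2*k+1" for p using PV lenE by auto
  have Vne: "V \<noteq> {}" using A by auto
  then have Pne: "P \<noteq> {}" using PV by auto
  have disj: "w \<in> N \<Longrightarrow> w \<notin> P" for w
  proof
    assume "w \<in> N" "w \<in> P"
    then obtain u v u' where e: "(u, v) \<in> E" "w = enc u @ [True] @ rev (enc v)"
      and u': "u' \<in> V" "w = enc u' @ [True] @ rev (enc u')"
      unfolding N_def PV R_samples_def by auto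
    have uv: "u \<in> V" "v \<in> V" using e A unfolding simple_graph_def by auto
    have "enc u = enc u' \<and> [True] @ rev (enc v) = [True] @ rev (enc u')"
      using e u' lenE uv by (metis append_eq_append_conv)
    then have "u = u'" "v = u'" using injE uv u' by (auto simp: inj_on_def)
    then show False using e irr by (auto simp: irrefl_def)
  qed
  have lenpre: "w \<in> pre P \<Longrightarrow> length w \<le> 2*k+1" for w
    unfolding pre_def using lenP by fastforce
  define Q where "Q = code ` pre P"
  define lay where "lay = (\<lambda>q. length (inv code q))"
  have can: "canonical_dfa Q (code []) (dl P) (code ` P) lay (2*k+1)"
    unfolding canonical_dfa_def
  proof (intro conjI)
    show "finite Q" unfolding Q_def pre_eq using fP by auto
    show "code [] \<in> Q"
    proof -
      obtain p where "p \<in> P" using Pne by auto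
      then have "[] \<in> pre P" by (auto simp: pre_def intro!: exI[of _ p])
      then show ?thesis unfolding Q_def by (rule imageI)
    qed
    show "code ` P \<subseteq> Q" unfolding Q_def pre_def
      by (intro image_mono) (auto intro: exI[of _ "[]"])
    show "\<forall>q\<in>Q. lay q \<le> 2 * k + 1" unfolding Q_def lay_def using lenpre by auto
    show "{q \<in> Q. lay q = 0} = {code []}"
      unfolding Q_def lay_def using \<open>code [] \<in> Q\<close> Q_def by (auto, metis code_one)
    show "\<forall>q a q'. dl P q a = Some q' \<longrightarrow> q \<in> Q \<and> q' \<in> Q \<and> lay q' = Suc (lay q)"
    proof (intro allI impI)
      fix q a q' assume "dl P q a = Some q'"
      then obtain w where w: "q = code w" "w @ [a] \<in> pre P" "q' = code (w @ [a])"
        by (auto simp: dl_def split: if_splits)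
      have "w \<in> pre P" using w(2) unfolding pre_def by auto
      then show "q \<in> Q \<and> q' \<in> Q \<and> lay q' = Suc (lay q)"
        using w unfolding Q_def lay_def by auto
    qed
    show "\<forall>q\<in>code ` P. lay q = 2 * k + 1" unfolding lay_def using lenP by auto
  qed
  have cons: "consistent (dl P) (code []) (code ` P) (R_samples V E enc)"
    unfolding consistent_def
  proof (intro conjI ballI)
    fix w assume "w \<in> fst (R_samples V E enc)"
    then have "w \<in> P" using P_def by simp
    then have "w \<in> pre P" unfolding pre_def by (auto intro: exI[of _ "[]"])
    then show "accepts (dl P) (code []) (code ` P) w"
      using run1[of "[]" w P] \<open>w \<in> P\<close> by (auto simp: accepts_def)
  next
    fix w assume "w \<in> snd (R_samples V E enc)"
    then have "w \<notin> P" using disj N_def by simp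
    show "\<not> accepts (dl P) (code []) (code ` P) w"
    proof
      assume "accepts (dl P) (code []) (code ` P) w"
      then obtain q where "run (dl P) (code []) w = Some q" "q \<in> code ` P"
        by (auto simp: accepts_def)
      then have "code w \<in> code ` P" using run2[of P "[]" w q] by simp
      then show False using \<open>w \<notin> P\<close> inj_code by (auto dest: injD)
    qed
  qed
  have "opt (R_samples V E enc) \<le> card Q"
    unfolding opt_def by (rule Least_le) (use can cons in blast)
  also have "card Q \<le> card (pre P)" unfolding Q_def by (rule card_image_le) (simp add: pre_eq fP)
  also have "\<dots> \<le> (\<Sum>p\<in>P. Suc (length p))" by (rule card_pre[OF fP])
  also have "\<dots> = card P * (2*k+2)" using lenP by simp
  also have "\<dots> \<le> card V * (2*k+2)" using cP by (rule mult_right_mono) simp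
  finally have o: "opt (R_samples V E enc) \<le> card V * (2*k+2)" .
  have k1: "k \<ge> 1" using A by (cases k) auto
  have cV: "real (card V) = 2 ^ k" using A by simp
  have lg: "log 2 (real (card V)) = real k" using cV by (simp add: log_nat_power)
  have n1: "real (card V) \<ge> 1" using A by simp
  have "real (opt (R_samples V E enc)) \<le> real (card V) * (2 * real k + 2)"
  proof -
    have "real (opt (R_samples V E enc)) \<le> real (card V * (2*k+2))" using o by (simp only: of_nat_le_iff)
    then show ?thesis by (simp add: algebra_simps)
  qed
  also have "\<dots> \<le> real (card V) * (4 * real k)" using k1 n1 by simp
  also have "\<dots> \<le> real (card V) ^ 2 * (4 * real k)"
    using n1 k1 by (intro mult_right_mono) (auto simp: power2_eq_square)
  finally show "real (opt (R_samples V E enc)) \<le> 4 * real (card V) ^ 2 * log 2 (real (card V))"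
    using lg by (simp add: mult_ac)
qed

end
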